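(* Let $s$ be an indeterminate, and for an integer $k$ put $\{k\}_s=s^k-s^{-k}$ and $[k]_s=\{k\}_s/\{1\}_s$. For positive integers $m,n$ let $V_H(m,n)=[mn]_s$ (the colored Jones polynomial of the Hopf link $H$, normalized so that the $k$-colored unknot has value $[k]_s$). Let $E_m,E_n,Q_m,Q_n$ act on functions $f(m,n)$ by $(E_mf)(m,n)=f(m+1,n)$, $(E_nf)(m,n)=f(m,n+1)$, $(Q_mf)(m,n)=s^mf(m,n)$, $(Q_nf)(m,n)=s^nf(m,n)$, and put $a(x)=x-x^{-1}$. Define \[A_{s;m}(H)=E_m^2-(Q_n+Q_n^{-1})E_m+1,\qquad A_{s;n}(H)=E_n^2-(Q_m+Q_m^{-1})E_n+1,\] \[A^{\mathrm{bi}}_{s;mn}(H)=a(Q_m)E_m-a(Q_n)E_n+a(Q_nQ_m^{-1}).\] Then $A_{s;m}(H)V_H=0$ and $A^{\mathrm{bi}}_{s;mn}(H)V_H=0$, and in the algebra described in the context the identity \[a(Q_m)a(sQ_m)A_{s;m}(H)-a(Q_n)a(sQ_n)A_{s;n}(H)=\{a(Q_m)E_m+a(Q_n)E_n-a(sQ_mQ_n)\}\,A^{\mathrm{bi}}_{s;mn}(H)\] holds.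
   Context: The identity is in the noncommutative algebra of polynomials in $E_m,E_n$ with coefficients in $\mathbb{Q}(s,Q_m,Q_n)$ written on the left, subject to $E_mE_n=E_nE_m$, $E_m\,p(s,Q_m,Q_n)=p(s,sQ_m,Q_n)\,E_m$ and $E_n\,p(s,Q_m,Q_n)=p(s,Q_m,sQ_n)\,E_n$ for rational functions $p$ (this is the composition rule of the operators above). *)

theory Defs
  imports "HOL-Computational_Algebra.Polynomial" "HOL-Computational_Algebra.Fraction_Field"
begin

type_synonym K = "rat poly fract"

definition sK :: K where "sK = Fract [:0, 1:] 1"

definition curly :: "int \<Rightarrow> K" where
  "curly k = sK powi k - sK powi (-k)"

definition qint :: "int \<Rightarrow> K" where
  "qint k = curly k / curly 1"

definition VH :: "nat \<Rightarrow> nat \<Rightarrow> K" where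
  "VH m n = qint (int m * int n)"

definition aa :: "'a::field \<Rightarrow> 'a" where
  "aa x = x - inverse x"

text \<open>The skew algebra: an element is given by its coefficients c_{ij}(s,Q_m,Q_n) of
  E_m^i E_n^j (coefficients written on the left).  Two elements are equal when all
  coefficients agree as functions of nonzero s, Q_m, Q_n (Laurent polynomial identity).\<close>
type_synonym 'a coef = "'a \<Rightarrow> 'a \<Rightarrow> 'a \<Rightarrow> 'a"
type_synonym 'a skew = "nat \<Rightarrow> nat \<Rightarrow> 'a coef"

definition sk_const :: "'a::field coef \<Rightarrow> 'a skew" where
  "sk_const c = (\<lambda>i j. if i = 0 \<and> j = 0 then c else (\<lambda>_ _ _. 0))"

definition sk_Em :: "'a::field skew" where
  "sk_Em = (\<lambda>i j. if i = 1 \<and> j = 0 then (\<lambda>_ _ _. 1) else (\<lambda>_ _ _. 0))"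

definition sk_En :: "'a::field skew" where
  "sk_En = (\<lambda>i j. if i = 0 \<and> j = 1 then (\<lambda>_ _ _. 1) else (\<lambda>_ _ _. 0))"

definition sk_add :: "'a::field skew \<Rightarrow> 'a skew \<Rightarrow> 'a skew" where
  "sk_add P R = (\<lambda>i j s qm qn. P i j s qm qn + R i j s qm qn)"

definition sk_diff :: "'a::field skew \<Rightarrow> 'a skew \<Rightarrow> 'a skew" where
  "sk_diff P R = (\<lambda>i j s qm qn. P i j s qm qn - R i j s qm qn)"

text \<open>Product using E_m^a E_n^b p(s,Q_m,Q_n) = p(s, s^a Q_m, s^b Q_n) E_m^a E_n^b.\<close>
definition sk_mult :: "'a::field skew \<Rightarrow> 'a skew \<Rightarrow> 'a skew" where
  "sk_mult P R = (\<lambda>i j s qm qn.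
     \<Sum>i1\<le>i. \<Sum>j1\<le>j. P i1 j1 s qm qn * R (i - i1) (j - j1) s (s ^ i1 * qm) (s ^ j1 * qn))"

definition sk_eq :: "'a::field skew \<Rightarrow> 'a skew \<Rightarrow> bool" where
  "sk_eq P R \<longleftrightarrow> (\<forall>i j s qm qn. s \<noteq> 0 \<longrightarrow> qm \<noteq> 0 \<longrightarrow> qn \<noteq> 0 \<longrightarrow>
      P i j s qm qn = R i j s qm qn)"

definition sk_apply :: "K skew \<Rightarrow> (nat \<Rightarrow> nat \<Rightarrow> K) \<Rightarrow> nat \<Rightarrow> nat \<Rightarrow> K" where
  "sk_apply P f m n = (\<Sum>(i, j) \<in> {(i, j). P i j \<noteq> (\<lambda>_ _ _. 0)}.
      P i j sK (sK ^ m) (sK ^ n) * f (m + i) (n + j))"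

definition A_m :: "'a::field skew" where
  "A_m = sk_add (sk_diff (sk_mult sk_Em sk_Em)
                  (sk_mult (sk_const (\<lambda>s qm qn. qn + inverse qn)) sk_Em))
                (sk_const (\<lambda>_ _ _. 1))"

definition A_n :: "'a::field skew" where
  "A_n = sk_add (sk_diff (sk_mult sk_En sk_En)
                  (sk_mult (sk_const (\<lambda>s qm qn. qm + inverse qm)) sk_En))
                (sk_const (\<lambda>_ _ _. 1))"

definition A_bi :: "'a::field skew" where
  "A_bi = sk_add (sk_diff (sk_mult (sk_const (\<lambda>s qm qn. aa qm)) sk_Em)
                          (sk_mult (sk_const (\<lambda>s qm qn. aa qn)) sk_En))
                 (sk_const (\<lambda>s qm qn. aa (qn * inverse qm)))"

end

theory Submission
  imports Defs
begin


lemma mult_supp: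
  assumes "\<And>i j s qm qn. a < i \<or> b < j \<Longrightarrow> P i j s qm qn = 0"
  shows "sk_mult P R i j s qm qn = (\<Sum>i1\<le>a. \<Sum>j1\<le>b. if i1 \<le> i \<and> j1 \<le> j then
           P i1 j1 s qm qn * R (i - i1) (j - j1) s (s ^ i1 * qm) (s ^ j1 * qn) else 0)"
proof -
  let ?g = "\<lambda>i1 j1. P i1 j1 s qm qn * R (i - i1) (j - j1) s (s ^ i1 * qm) (s ^ j1 * qn)"
  have inner: "(\<Sum>j1\<le>j. ?g i1 j1) = (\<Sum>j1\<le>b. if j1 \<le> j then ?g i1 j1 else 0)" for i1
  proof -
    have "(\<Sum>j1\<le>j. ?g i1 j1) = (\<Sum>j1\<in>{..j} \<inter> {..b}. ?g i1 j1)"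
      by (rule sum.mono_neutral_right) (auto simp: assms)
    also have "\<dots> = (\<Sum>j1\<in>{..b} \<inter> {j1. j1 \<le> j}. ?g i1 j1)"
      by (rule sum.cong) auto
    also have "\<dots> = (\<Sum>j1\<le>b. if j1 \<le> j then ?g i1 j1 else 0)"
      by (simp add: sum.inter_restrict)
    finally show ?thesis .
  qed
  let ?h = "\<lambda>i1. (\<Sum>j1\<le>b. if j1 \<le> j then ?g i1 j1 else 0)"
  have hz: "?h i1 = 0" if "a < i1" for i1 using that by (auto intro!: sum.neutral simp: assms)
  have "sk_mult P R i j s qm qn = (\<Sum>i1\<le>i. ?h i1)"
    unfolding sk_mult_def by (simp add: inner)
  also have "\<dots> = (\<Sum>i1\<in>{..i} \<inter> {..a}. ?h i1)"
    by (rule sum.mono_neutral_right) (auto intro!: hz)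
  also have "\<dots> = (\<Sum>i1\<in>{..a} \<inter> {i1. i1 \<le> i}. ?h i1)"
    by (rule sum.cong) auto
  also have "\<dots> = (\<Sum>i1\<le>a. if i1 \<le> i then ?h i1 else 0)"
    by (simp add: sum.inter_restrict)
  also have "\<dots> = (\<Sum>i1\<le>a. \<Sum>j1\<le>b. if i1 \<le> i \<and> j1 \<le> j then ?g i1 j1 else 0)"
    by (rule sum.cong) auto
  finally show ?thesis .
qed

lemma const_mult: "sk_mult (sk_const c) R i j s qm qn = c s qm qn * R i j s qm qn"
  by (subst mult_supp[where a=0 and b=0]) (auto simp: sk_const_def)

lemma Em_mult: "sk_mult sk_Em R i j s qm qn = (if 1 \<le> i then R (i - 1) j s (s * qm) qn else 0)"
  by (subst mult_supp[where a=1 and b=0]) (auto simp: sk_Em_def)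

lemma En_mult: "sk_mult sk_En R i j s qm qn = (if 1 \<le> j then R i (j - 1) s qm (s * qn) else 0)"
  by (subst mult_supp[where a=0 and b=1]) (auto simp: sk_En_def)

lemma A_m_eq: "(A_m::'a::field skew) i j s qm qn = (if i = 2 \<and> j = 0 then 1 else if i = 1 \<and> j = 0 then -(qn + inverse qn)
   else if i = 0 \<and> j = 0 then 1 else 0)"
  unfolding A_m_def sk_add_def sk_diff_def const_mult Em_mult
  by (auto simp: sk_Em_def sk_const_def)

lemma A_n_eq: "(A_n::'a::field skew) i j s qm qn = (if i = 0 \<and> j = 2 then 1 else if i = 0 \<and> j = 1 then -(qm + inverse qm)
   else if i = 0 \<and> j = 0 then 1 else 0)"
  unfolding A_n_def sk_add_def sk_diff_def const_mult En_mult
  by (auto simp: sk_En_def sk_const_def)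

lemma A_bi_eq: "(A_bi::'a::field skew) i j s qm qn = (if i = 1 \<and> j = 0 then aa qm else if i = 0 \<and> j = 1 then - aa qn
   else if i = 0 \<and> j = 0 then aa (qn * inverse qm) else 0)"
  unfolding A_bi_def sk_add_def sk_diff_def const_mult En_mult Em_mult
  by (auto simp: sk_En_def sk_Em_def sk_const_def)

lemma sum2: "(\<Sum>i\<le>Suc 0. f i) = f 0 + f (Suc 0)"
  by (simp add: atMost_Suc add.commute)

definition XX :: "'a::field skew" where
 "XX = sk_diff (sk_add (sk_mult (sk_const (\<lambda>s qm qn. aa qm)) sk_Em)
                                     (sk_mult (sk_const (\<lambda>s qm qn. aa qn)) sk_En))
                             (sk_const (\<lambda>s qm qn. aa (s * qm * qn)))"

lemma XX_eq: "(XX::'a::field skew) i j s qm qn = (if i = 1 \<and> j = 0 then aa qm else if i = 0 \<and> j = 1 then aa qn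
   else if i = 0 \<and> j = 0 then - aa (s * qm * qn) else 0)"
  unfolding XX_def sk_add_def sk_diff_def const_mult En_mult Em_mult
  by (auto simp: sk_En_def sk_Em_def sk_const_def)

lemma ident:
  "sk_eq
           (sk_diff (sk_mult (sk_const (\<lambda>s qm qn. aa qm * aa (s * qm))) (A_m :: K skew))
                    (sk_mult (sk_const (\<lambda>s qm qn. aa qn * aa (s * qn))) A_n))
           (sk_mult XX A_bi)"
  unfolding sk_eq_def
proof (intro allI impI)
  fix i j and s qm qn :: K
  assume s: "s \<noteq> 0" and m: "qm \<noteq> 0" and n: "qn \<noteq> 0"
  have R: "sk_mult XX A_bi i j s qm qn = (\<Sum>i1\<le>Suc 0. \<Sum>j1\<le>Suc 0. if i1 \<le> i \<and> j1 \<le> j then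
           XX i1 j1 s qm qn * A_bi (i - i1) (j - j1) s (s ^ i1 * qm) (s ^ j1 * qn) else 0)"
    by (rule mult_supp) (auto simp: XX_eq)
  have ci: "i = 0 \<or> i = 1 \<or> i = 2 \<or> i \<ge> 3" by linarith
  have cj: "j = 0 \<or> j = 1 \<or> j = 2 \<or> j \<ge> 3" by linarith
  show "sk_diff (sk_mult (sk_const (\<lambda>s qm qn. aa qm * aa (s * qm))) (A_m :: K skew))
                    (sk_mult (sk_const (\<lambda>s qm qn. aa qn * aa (s * qn))) A_n) i j s qm qn =
           sk_mult XX A_bi i j s qm qn"
    unfolding R sum2 sk_diff_def const_mult A_m_eq A_n_eq
    using ci cj apply (elim disjE) apply (simp_all add: XX_eq A_bi_eq)
    apply (simp_all add: aa_def field_simps s m n)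
    done
qed


lemma sK_nz: "sK \<noteq> 0"
  by (simp add: sK_def Zero_fract_def eq_fract)

definition DD :: "nat \<Rightarrow> K" where "DD k = sK ^ k - inverse (sK ^ k)"

lemma VH_eq: "VH m n = DD (m * n) / curly 1"
  unfolding VH_def qint_def curly_def DD_def
  by (simp add: power_int_minus flip: of_nat_mult)

lemma apply_supp:
  assumes "finite T" "\<And>i j. (i, j) \<notin> T \<Longrightarrow> P i j = (\<lambda>_ _ _. 0)"
  shows "sk_apply P f m n = (\<Sum>(i, j)\<in>T. P i j sK (sK ^ m) (sK ^ n) * f (m + i) (n + j))"
  unfolding sk_apply_def
  by (rule sum.mono_neutral_left) (use assms in auto)

lemma part1: "sk_apply A_m VH m n = 0"
proof -
  have "sk_apply A_m VH m n = (\<Sum>(i, j)\<in>{(0,0),(1,0),(2,0)}. A_m i j sK (sK ^ m) (sK ^ n) * VH (m + i) (n + j))"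
    by (rule apply_supp) (auto simp: A_m_eq fun_eq_iff)
  also have "\<dots> = (DD (m*n) - (sK^n + inverse (sK^n)) * DD ((m+1)*n) + DD ((m+2)*n)) / curly 1"
    apply (simp add: A_m_eq VH_eq diff_divide_distrib add_divide_distrib algebra_simps)
    apply (rule disjI2, rule arg_cong[where f=DD], simp)
    done
  also have "DD (m*n) - (sK^n + inverse (sK^n)) * DD ((m+1)*n) + DD ((m+2)*n) = 0"
    using sK_nz unfolding DD_def by (simp add: power_add algebra_simps field_simps)
  finally show ?thesis by simp
qed

lemma part2: "sk_apply A_bi VH m n = 0"
proof -
  have "sk_apply A_bi VH m n = (\<Sum>(i, j)\<in>{(0,0),(1,0),(0,1)}. A_bi i j sK (sK ^ m) (sK ^ n) * VH (m + i) (n + j))"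
    by (rule apply_supp) (auto simp: A_bi_eq fun_eq_iff)
  also have "\<dots> = (aa (sK^n * inverse (sK^m)) * DD (m*n) + aa (sK^m) * DD ((m+1)*n) - aa (sK^n) * DD (m*(n+1))) / curly 1"
    by (simp add: A_bi_eq VH_eq diff_divide_distrib add_divide_distrib algebra_simps)
  also have "aa (sK^n * inverse (sK^m)) * DD (m*n) + aa (sK^m) * DD ((m+1)*n) - aa (sK^n) * DD (m*(n+1)) = 0"
    using sK_nz unfolding DD_def aa_def by (simp add: power_add algebra_simps field_simps)
  finally show ?thesis by simp
qed


theorem mainTheorem1:
  shows "(\<forall>m n. 0 < m \<longrightarrow> 0 < n \<longrightarrow> sk_apply A_m VH m n = 0)
       \<and> (\<forall>m n. 0 < m \<longrightarrow> 0 < n \<longrightarrow> sk_apply A_bi VH m n = 0)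
       \<and> sk_eq
           (sk_diff (sk_mult (sk_const (\<lambda>s qm qn. aa qm * aa (s * qm))) (A_m :: K skew))
                    (sk_mult (sk_const (\<lambda>s qm qn. aa qn * aa (s * qn))) A_n))
           (sk_mult (sk_diff (sk_add (sk_mult (sk_const (\<lambda>s qm qn. aa qm)) sk_Em)
                                     (sk_mult (sk_const (\<lambda>s qm qn. aa qn)) sk_En))
                             (sk_const (\<lambda>s qm qn. aa (s * qm * qn))))
                    A_bi)"
    using part1 part2 ident unfolding XX_def by blast

end
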